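(* Let $\mu<\lambda$ with $\nu=\sqrt{\lambda^2-\mu^2}\in(0,1)$, and let $\alpha\in\mathbb R$, $\vartheta\in(0,\pi)$. Then $PCT\,f_{(\alpha,\vartheta)\,\nu,\mathbf p}$ is a constant multiple of $f_{(\alpha,\vartheta)\,\nu,\mathbf p}$ (for all $\mathbf p$) only if $\vartheta=\pi\nu$; and for every $\alpha\in\mathbb R$, $$PCT\,f_{(\alpha,\pi\nu)\,\nu,\mathbf p}=-i\,f_{(\alpha,\pi\nu)\,\nu,\mathbf p}.$$
   Context: Fix $\omega>0$; work in the conformal chart $(t,\mathbf x)$, $t<0$, $\mathbf x\in\mathbb R^3$, of de Sitter spacetime. Let $\mu=m/\omega$ ($m$ the mass), $\lambda>0$ the coupling constant, $\mu<\lambda$, $\nu=\sqrt{\lambda^2-\mu^2}$. $J_a$ is the Bessel function of the first kind. Square-root convention: for $x>0$, $\sqrt x>0$ and $\sqrt{-x}=-i\sqrt x$; $\sqrt{ab}$ is read as $\sqrt a\sqrt b$. For $\alpha\in\mathbb R$, real $\vartheta$ with $\sin\vartheta\ne0$, define $$f_{(\alpha,\vartheta)\,\nu,\mathbf p}(t,\mathbf x)=\sqrt{\frac{\pi}{\omega}}\frac{i}{2\sqrt{\sin\pi\nu}\sqrt{\sin\vartheta}}\frac{(-\omega t)^{3/2}}{(2\pi)^{3/2}}\Big[e^{-\frac12 i\vartheta-\alpha}J_\nu(-pt)-e^{\frac12 i\vartheta+\alpha}J_{-\nu}(-pt)\Big]e^{i\mathbf x\cdot\mathbf p},\quad p=|\mathbf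 p|.$$ Operators: $(Pf)(t,\mathbf x)=f(t,-\mathbf x)$; $Cf=f^*$ (antilinear); $T$ replaces $t$ by $-t$ in this formula, where the multivalued factors are continued as $(-\omega(-t))^{3/2}=e^{\frac32 i\pi}(-\omega t)^{3/2}$ and $J_a(-s)=e^{i\pi a}J_a(s)$ for $s>0$ and any index $a$; $PCT=P\circ C\circ T$. *)

theory Defs
  imports "HOL-Analysis.Analysis"
begin

text \<open>Bessel function of the first kind J_a(x), real order a, via its power series
  (with the reciprocal Gamma function, entire, so negative non-integer orders are fine).
  Only used for x > 0.\<close>
definition besselJ :: "real \<Rightarrow> real \<Rightarrow> real" where
  "besselJ a x = (\<Sum>k. (-1) ^ k * rGamma (real k + a + 1) / fact k * (x / 2) powr (2 * real k + a))"

definition csqrt_conv :: "real \<Rightarrow> complex" where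
  "csqrt_conv x = (if 0 \<le> x then complex_of_real (sqrt x) else - \<i> * complex_of_real (sqrt (- x)))"

definition besselJc :: "real \<Rightarrow> real \<Rightarrow> complex" where
  "besselJc a z = (if 0 \<le> z then complex_of_real (besselJ a z)
                   else exp (\<i> * complex_of_real (pi * a)) * complex_of_real (besselJ a (- z)))"

definition pow32c :: "real \<Rightarrow> complex" where
  "pow32c y = (if 0 \<le> y then complex_of_real (y powr (3/2))
               else exp (\<i> * complex_of_real (3 * pi / 2)) * complex_of_real ((- y) powr (3/2)))"

text \<open>The formula for f_{(alpha,theta) nu,p}(t,x), extended to all real t by the continuations
  above (for t < 0 it is literally the formula of the paper).\<close>
definition f_formula :: "real \<Rightarrow> real \<Rightarrow> real \<Rightarrow> real \<Rightarrow> real^3 \<Rightarrow> real \<Rightarrow> real^3 \<Rightarrow> complex" where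
  "f_formula \<omega> \<nu> \<alpha> \<theta> p t x =
     complex_of_real (sqrt (pi / \<omega>)) * \<i>
       / (2 * csqrt_conv (sin (pi * \<nu>)) * csqrt_conv (sin \<theta>))
     * pow32c (- \<omega> * t) / complex_of_real ((2 * pi) powr (3/2))
     * (exp (- \<i> * complex_of_real (\<theta> / 2) - complex_of_real \<alpha>) * besselJc \<nu> (- norm p * t)
        - exp (\<i> * complex_of_real (\<theta> / 2) + complex_of_real \<alpha>) * besselJc (- \<nu>) (- norm p * t))
     * exp (\<i> * complex_of_real (x \<bullet> p))"

definition fmode :: "real \<Rightarrow> real \<Rightarrow> real \<Rightarrow> real \<Rightarrow> real^3 \<Rightarrow> real \<Rightarrow> real^3 \<Rightarrow> complex" where
  "fmode \<omega> \<nu> \<alpha> \<theta> p = (\<lambda>t x. f_formula \<omega> \<nu> \<alpha> \<theta> p t x)"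

definition T_fmode :: "real \<Rightarrow> real \<Rightarrow> real \<Rightarrow> real \<Rightarrow> real^3 \<Rightarrow> real \<Rightarrow> real^3 \<Rightarrow> complex" where
  "T_fmode \<omega> \<nu> \<alpha> \<theta> p = (\<lambda>t x. f_formula \<omega> \<nu> \<alpha> \<theta> p (- t) x)"

definition Pop :: "(real \<Rightarrow> real^3 \<Rightarrow> complex) \<Rightarrow> real \<Rightarrow> real^3 \<Rightarrow> complex" where
  "Pop f = (\<lambda>t x. f t (- x))"

definition Cop :: "(real \<Rightarrow> real^3 \<Rightarrow> complex) \<Rightarrow> real \<Rightarrow> real^3 \<Rightarrow> complex" where
  "Cop f = (\<lambda>t x. cnj (f t x))"

definition PCT_fmode :: "real \<Rightarrow> real \<Rightarrow> real \<Rightarrow> real \<Rightarrow> real^3 \<Rightarrow> real \<Rightarrow> real^3 \<Rightarrow> complex" where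
  "PCT_fmode \<omega> \<nu> \<alpha> \<theta> p = Pop (Cop (T_fmode \<omega> \<nu> \<alpha> \<theta> p))"

end

theory Submission
  imports Defs
begin


definition bc :: "real \<Rightarrow> nat \<Rightarrow> real" where
  "bc a k = (-1) ^ k * rGamma (real k + a + 1) / fact k"

lemma aux: fixes p F G m Y Yn :: real
  assumes "p > 0" "F > 0" "m \<ge> 0"
  shows "G/((1+m)*F) * (Y*Yn) = (p*G)/F*Yn*(Y/(p*(m+1)))"
proof -
  have "(1+m)*F \<noteq> 0" "p*(m+1) \<noteq> 0" using assms by auto
  thus ?thesis using assms by (simp add: divide_simps ac_simps)
qed

lemma bc_summable: "summable (\<lambda>k. bc a k * y ^ k)"
proof (rule summable_ratio_test[of "1/2" "nat (ceiling (2 * \<bar>y\<bar> + \<bar>a\<bar>)) + 1"])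
  fix n assume n: "nat (ceiling (2 * \<bar>y\<bar> + \<bar>a\<bar>)) + 1 \<le> n"
  hence n1: "real n \<ge> 2 * \<bar>y\<bar> + \<bar>a\<bar> + 1" by linarith
  have pos: "real n + a + 1 \<ge> 1" using n1 by linarith
  have r: "rGamma (real n + a + 1) = (real n + a + 1) * rGamma (real (Suc n) + a + 1)"
    using rGamma_plus1[of "real n + a + 1"] by (simp add: add_ac)
  have "norm (bc a (Suc n) * y ^ Suc n) = \<bar>rGamma (real (Suc n) + a + 1)\<bar> / fact (Suc n) * \<bar>y\<bar> ^ Suc n"
    by (simp add: bc_def abs_mult power_abs)
  also have "\<dots> = (\<bar>rGamma (real n + a + 1)\<bar> / fact n * \<bar>y\<bar> ^ n) * (\<bar>y\<bar> / ((real n + a + 1) * (real n + 1)))"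
  proof -
    have ap: "\<bar>real n + a + 1\<bar> = real n + a + 1" using pos by simp
    show ?thesis
    unfolding r using pos fact_gt_zero[of n, where 'a=real]
    by (simp only: fact_Suc of_nat_Suc abs_mult power_Suc ap) (rule aux, use pos in auto)
  qed
  also have "\<dots> \<le> (\<bar>rGamma (real n + a + 1)\<bar> / fact n * \<bar>y\<bar> ^ n) * (1/2)"
  proof (rule mult_left_mono)
    have "(real n + a + 1) * (real n + 1) \<ge> 1 * (real n + 1)"
      using pos by (intro mult_right_mono) auto
    hence "2 * \<bar>y\<bar> \<le> (real n + a + 1) * (real n + 1)" using n1 by (simp add: algebra_simps)
    thus "\<bar>y\<bar> / ((real n + a + 1) * (real n + 1)) \<le> 1/2" using pos
      by (simp add: divide_simps)
  qed auto
  also have "\<dots> = 1/2 * norm (bc a n * y ^ n)"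
    by (simp add: bc_def abs_mult power_abs)
  finally show "norm (bc a (Suc n) * y ^ Suc n) \<le> 1/2 * norm (bc a n * y ^ n)" .
qed simp

definition bg :: "real \<Rightarrow> real \<Rightarrow> real" where
  "bg a y = (\<Sum>k. bc a k * y ^ k)"

lemma bg_cont: "isCont (bg a) y"
  unfolding bg_def by (rule isCont_powser_converges_everywhere[OF bc_summable])

lemma bg_0: "bg a 0 = rGamma (a + 1)"
proof -
  have "bg a 0 = bc a 0" unfolding bg_def by (rule powser_zero)
  thus ?thesis by (simp add: bc_def)
qed

lemma besselJ_eq: assumes "x > 0"
  shows "besselJ a x = (x/2) powr a * bg a ((x/2)^2)"
proof -
  have "\<And>k. (-1) ^ k * rGamma (real k + a + 1) / fact k * (x / 2) powr (2 * real k + a)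
     = (x/2) powr a * (bc a k * ((x/2)^2) ^ k)"
  proof -
    fix k
    have "(x / 2) powr (2 * real k + a) = (x/2) powr a * ((x/2)^2)^k"
    proof -
      have "(x / 2) powr (2 * real k + a) = (x/2) powr (real (2*k)) * (x/2) powr a"
        by (simp add: powr_add)
      also have "(x/2) powr (real (2*k)) = (x/2)^(2*k)" using assms by (rule_tac powr_realpow) simp
      also have "\<dots> = ((x/2)^2)^k" by (simp add: power_mult)
      finally show ?thesis by simp
    qed
    thus "?thesis k" by (simp add: bc_def)
  qed
  hence "besselJ a x = (\<Sum>k. (x/2) powr a * (bc a k * ((x/2)^2) ^ k))"
    unfolding besselJ_def by simp
  also have "\<dots> = (x/2) powr a * bg a ((x/2)^2)"
    unfolding bg_def by (rule suminf_mult[OF bc_summable])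
  finally show ?thesis .
qed

lemma bg_lim: "((\<lambda>u. bg a (u^2)) \<longlongrightarrow> rGamma (a+1)) (at_right 0)"
proof -
  have "isCont (\<lambda>u. bg a (u^2)) 0"
    by (rule isCont_o2[OF _ bg_cont]) simp
  hence "((\<lambda>u. bg a (u^2)) \<longlongrightarrow> bg a (0^2)) (at 0)" by (simp add: isCont_def)
  hence "((\<lambda>u. bg a (u^2)) \<longlongrightarrow> bg a (0^2)) (at_right 0)"
    by (rule tendsto_mono[OF at_le, rotated]) simp
  thus ?thesis by (simp add: bg_0)
qed

lemma rGamma_pos_nz: "(z::real) > 0 \<Longrightarrow> rGamma z \<noteq> 0"
  by (auto simp: rGamma_eq_zero_iff nonpos_Ints_def)

lemma bessel_indep:
  fixes a b :: complex and \<nu> :: real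
  assumes "0 < \<nu>" "\<nu> < 1"
    and H: "\<And>x. x > 0 \<Longrightarrow> a * of_real (besselJ \<nu> x) + b * of_real (besselJ (-\<nu>) x) = 0"
  shows "a = 0 \<and> b = 0"
proof -
  define \<phi> where "\<phi> u = a * of_real (u powr (2*\<nu>) * bg \<nu> (u^2)) + b * of_real (bg (-\<nu>) (u^2))" for u
  have \<phi>0: "\<phi> u = 0" if "u > 0" for u
  proof -
    have e: "u powr \<nu> * (u powr \<nu> * bg \<nu> (u\<^sup>2)) = u powr (2*\<nu>) * bg \<nu> (u^2)"
      "u powr \<nu> * (u powr - \<nu> * bg (- \<nu>) (u\<^sup>2)) = bg (-\<nu>) (u^2)"
      using that by (simp_all add: powr_add[symmetric] powr_minus)
    have "of_real (u powr \<nu>) * (a * of_real (besselJ \<nu> (2*u)) + b * of_real (besselJ (-\<nu>) (2*u))) = 0"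
      using H[of "2*u"] that by simp
    moreover have "besselJ \<nu> (2*u) = u powr \<nu> * bg \<nu> (u^2)" "besselJ (-\<nu>) (2*u) = u powr -\<nu> * bg (-\<nu>) (u^2)"
      using that by (simp_all add: besselJ_eq)
    ultimately have "a * (of_real (u powr \<nu>) * of_real (u powr \<nu> * bg \<nu> (u\<^sup>2))) + b * (of_real (u powr \<nu>) * of_real (u powr - \<nu> * bg (- \<nu>) (u\<^sup>2))) = 0"
      by (simp add: algebra_simps)
    thus ?thesis unfolding \<phi>_def by (simp only: of_real_mult[symmetric] e)
  qed
  have ev: "eventually (\<lambda>u. \<phi> u = 0) (at_right 0)"
    by (rule eventually_mono[OF eventually_at_right_less]) (use \<phi>0 in auto)
  have "((\<lambda>u. u powr (2*\<nu>)) \<longlongrightarrow> 0) (at_right 0)"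
    using assms by (intro tendsto_zero_powrI[where b="2*\<nu>"] tendsto_ident_at tendsto_const)
      (auto intro: eventually_mono[OF eventually_at_right_less])
  hence lim: "(\<phi> \<longlongrightarrow> a * of_real (0 * rGamma (\<nu>+1)) + b * of_real (rGamma (-\<nu>+1))) (at_right 0)"
    unfolding \<phi>_def by (intro tendsto_intros bg_lim)
  have "(\<phi> \<longlongrightarrow> 0) (at_right 0)" using ev by (rule tendsto_eventually)
  from tendsto_unique[OF _ lim this] have "b * of_real (rGamma (-\<nu>+1)) = 0" by simp
  hence b0: "b = 0" using rGamma_pos_nz[of "-\<nu>+1"] assms by simp
  define \<psi> where "\<psi> u = a * of_real (bg \<nu> (u^2))" for u
  have "eventually (\<lambda>u. \<psi> u = 0) (at_right 0)"
  proof -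
    have "\<psi> u = 0" if "u > 0" for u
    proof -
      have "a * of_real (u powr (2*\<nu>) * bg \<nu> (u^2)) = 0" using \<phi>0[OF that] unfolding \<phi>_def b0 by simp
      hence "of_real (u powr (2*\<nu>)) * \<psi> u = 0" unfolding \<psi>_def by (simp only: of_real_mult ac_simps)
      moreover have "u powr (2*\<nu>) \<noteq> 0" using that by simp
      ultimately show ?thesis by simp
    qed
    thus ?thesis by (rule eventually_mono[OF eventually_at_right_less, rotated]) auto
  qed
  hence l1: "(\<psi> \<longlongrightarrow> 0) (at_right 0)" by (rule tendsto_eventually)
  have l2: "(\<psi> \<longlongrightarrow> a * of_real (rGamma (\<nu>+1))) (at_right 0)"
    unfolding \<psi>_def by (intro tendsto_intros bg_lim)
  from tendsto_unique[OF _ l2 l1] have "a * of_real (rGamma (\<nu>+1)) = 0" by simp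
  hence "a = 0" using rGamma_pos_nz[of "\<nu>+1"] assms by simp
  with b0 show ?thesis by simp
qed




definition Qc :: "real \<Rightarrow> real \<Rightarrow> real \<Rightarrow> complex" where
  "Qc \<omega> \<nu> \<theta> = complex_of_real (sqrt (pi / \<omega>)) * \<i> / (2 * csqrt_conv (sin (pi * \<nu>)) * csqrt_conv (sin \<theta>))
      / complex_of_real ((2 * pi) powr (3/2))"

definition Ac :: "real \<Rightarrow> real \<Rightarrow> complex" where
  "Ac \<alpha> \<theta> = exp (- \<i> * complex_of_real (\<theta> / 2) - complex_of_real \<alpha>)"
definition Bc :: "real \<Rightarrow> real \<Rightarrow> complex" where
  "Bc \<alpha> \<theta> = exp (\<i> * complex_of_real (\<theta> / 2) + complex_of_real \<alpha>)"

lemma fm_eq: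
  assumes "\<omega> > 0" "t < 0"
  shows "fmode \<omega> \<nu> \<alpha> \<theta> p t x = Qc \<omega> \<nu> \<theta> * of_real ((- \<omega> * t) powr (3/2))
     * (Ac \<alpha> \<theta> * of_real (besselJ \<nu> (- norm p * t)) - Bc \<alpha> \<theta> * of_real (besselJ (-\<nu>) (- norm p * t)))
     * exp (\<i> * complex_of_real (x \<bullet> p))"
proof -
  have h1: "0 \<le> - \<omega> * t" "0 \<le> - norm p * t" using assms by (simp_all add: mult_nonneg_nonpos)
  have p1: "pow32c (- \<omega> * t) = of_real ((- \<omega> * t) powr (3/2))" using h1 by (simp add: pow32c_def)
  have b1: "besselJc a (- norm p * t) = of_real (besselJ a (- norm p * t))" for a
    using h1 by (simp add: besselJc_def)
  have g: "\<And>X D P R Br E :: complex. X / D * P / R * Br * E = X / D / R * P * Br * E"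
    by (simp add: divide_inverse mult_ac)
  show ?thesis unfolding fmode_def f_formula_def Qc_def Ac_def Bc_def p1 b1 by (rule g)
qed

lemma PCT_eq:
  assumes "\<omega> > 0" "t < 0" "p \<noteq> 0"
  shows "PCT_fmode \<omega> \<nu> \<alpha> \<theta> p t x = cnj (Qc \<omega> \<nu> \<theta>) * \<i> * of_real ((- \<omega> * t) powr (3/2))
     * (cnj (Ac \<alpha> \<theta>) * exp (- \<i> * of_real (pi * \<nu>)) * of_real (besselJ \<nu> (- norm p * t))
        - cnj (Bc \<alpha> \<theta>) * exp (\<i> * of_real (pi * \<nu>)) * of_real (besselJ (-\<nu>) (- norm p * t)))
     * exp (\<i> * complex_of_real (x \<bullet> p))"
proof -
  have h1: "\<not> 0 \<le> - \<omega> * - t" "\<not> 0 \<le> - norm p * - t \<or> norm p = 0" using assms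
    by (auto simp: mult_pos_neg not_le)
  have e3: "cnj (exp (\<i> * complex_of_real (3 * pi / 2))) = \<i>"
  proof -
    have "3*pi/2 = pi/2 + pi" by simp
    hence "sin (3*pi/2) = - sin (pi/2)" "cos (3*pi/2) = - cos (pi/2)"
      by (simp_all only: sin_periodic_pi cos_periodic_pi)
    hence "sin (3*pi/2) = -1" "cos (3*pi/2) = 0" by simp_all
    hence c: "cis (3*pi/2) = - \<i>" by (simp add: complex_eq_iff)
    have "exp (\<i> * complex_of_real (3 * pi / 2)) = cis (3*pi/2)" by (rule cis_conv_exp[symmetric])
    thus ?thesis using c by simp
  qed
  have np: "norm p > 0" using assms by simp
  have h2: "- \<omega> * - t < 0" "- norm p * - t < 0" using assms np by (simp_all add: mult_pos_neg)
  have p2: "pow32c (- \<omega> * - t) = exp (\<i> * complex_of_real (3 * pi / 2)) * of_real ((- \<omega> * t) powr (3/2))"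
    using h2 by (simp add: pow32c_def)
  have b2: "besselJc a (- norm p * - t) = exp (\<i> * of_real (pi * a)) * of_real (besselJ a (- norm p * t))" for a
    using h2 by (simp add: besselJc_def)
  have e2: "cnj (exp (\<i> * complex_of_real ((- x) \<bullet> p))) = exp (\<i> * complex_of_real (x \<bullet> p))"
    by (simp add: exp_cnj)
  have ce: "cnj (exp (\<i> * complex_of_real (pi * a))) = exp (- \<i> * of_real (pi * a))" for a
    by (simp add: exp_cnj)
  have mm: "exp (- \<i> * complex_of_real (pi * - \<nu>)) = exp (\<i> * complex_of_real (pi * \<nu>))" by simp
  have g: "\<And>X D P R A J1 B J2 E e1 e2 :: complex.
     cnj (X / D * P / R * (A * (e1 * J1) - B * (e2 * J2)) * E) =
     cnj (X / D / R) * cnj P * (cnj A * cnj e1 * cnj J1 - cnj B * cnj e2 * cnj J2) * cnj E"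
    by (simp add: divide_inverse mult_ac)
  show ?thesis unfolding PCT_fmode_def Pop_def Cop_def T_fmode_def f_formula_def Qc_def[symmetric] Ac_def[symmetric] Bc_def[symmetric] p2 b2 g
    by (simp only: complex_cnj_mult complex_cnj_complex_of_real e3 e2 ce minus_minus mult.assoc mm)
qed

lemma Qc_cnj: assumes "sin (pi * \<nu>) \<ge> 0" "sin \<theta> \<ge> 0"
  shows "cnj (Qc \<omega> \<nu> \<theta>) = - Qc \<omega> \<nu> \<theta>"
  using assms by (simp add: Qc_def csqrt_conv_def)

lemma Qc_nz: assumes "\<omega> > 0" "sin (pi * \<nu>) > 0" "sin \<theta> > 0"
  shows "Qc \<omega> \<nu> \<theta> \<noteq> 0"
  using assms by (simp add: Qc_def csqrt_conv_def)

lemma cc: "cnj (- \<i> * complex_of_real x - complex_of_real a) = \<i> * complex_of_real x - complex_of_real a"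
   "cnj (\<i> * complex_of_real x + complex_of_real a) = - \<i> * complex_of_real x + complex_of_real a"
  by simp_all

lemma Ac_fix: "cnj (Ac \<alpha> (pi * \<nu>)) * exp (- \<i> * of_real (pi * \<nu>)) = Ac \<alpha> (pi * \<nu>)"
proof -
  have "cnj (Ac \<alpha> (pi * \<nu>)) * exp (- \<i> * of_real (pi * \<nu>))
     = exp (\<i> * of_real (pi * \<nu> / 2) - of_real \<alpha> + (- \<i> * of_real (pi * \<nu>)))"
    unfolding Ac_def by (simp only: exp_cnj exp_add[symmetric] cc)
  also have "\<i> * of_real (pi * \<nu> / 2) - of_real \<alpha> + (- \<i> * of_real (pi * \<nu>))
     = - \<i> * of_real (pi * \<nu> / 2) - of_real \<alpha>" by (simp add: algebra_simps)
  finally show ?thesis by (simp add: Ac_def)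
qed

lemma Bc_fix: "cnj (Bc \<alpha> (pi * \<nu>)) * exp (\<i> * of_real (pi * \<nu>)) = Bc \<alpha> (pi * \<nu>)"
proof -
  have "cnj (Bc \<alpha> (pi * \<nu>)) * exp (\<i> * of_real (pi * \<nu>))
     = exp (- \<i> * of_real (pi * \<nu> / 2) + of_real \<alpha> + (\<i> * of_real (pi * \<nu>)))"
    unfolding Bc_def by (simp only: exp_cnj exp_add[symmetric] cc)
  also have "- \<i> * of_real (pi * \<nu> / 2) + of_real \<alpha> + (\<i> * of_real (pi * \<nu>))
     = \<i> * of_real (pi * \<nu> / 2) + of_real \<alpha>" by (simp add: algebra_simps)
  finally show ?thesis by (simp add: Bc_def)
qed

lemma part2:
  assumes "\<omega> > 0" "0 < \<nu>" "\<nu> < 1" "p \<noteq> 0" "t < 0"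
  shows "PCT_fmode \<omega> \<nu> \<alpha> (pi * \<nu>) p t x = - \<i> * fmode \<omega> \<nu> \<alpha> (pi * \<nu>) p t x"
proof -
  have s: "sin (pi * \<nu>) > 0" using assms by (intro sin_gt_zero) auto
  show ?thesis
    unfolding PCT_eq[OF assms(1,5,4)] fm_eq[OF assms(1,5)] Qc_cnj[OF less_imp_le[OF s] less_imp_le[OF s]]
      Ac_fix Bc_fix
    by (simp add: algebra_simps)
qed

lemma part1:
  assumes "\<omega> > 0" "0 < \<nu>" "\<nu> < 1" "0 < \<theta>" "\<theta> < pi"
    and H: "\<forall>p::real^3. p \<noteq> 0 \<longrightarrow> (\<exists>c::complex. \<forall>t<0. \<forall>x.
               PCT_fmode \<omega> \<nu> \<alpha> \<theta> p t x = c * fmode \<omega> \<nu> \<alpha> \<theta> p t x)"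
  shows "\<theta> = pi * \<nu>"
proof -
  define p :: "real^3" where "p = axis 1 1"
  have p0: "p \<noteq> 0" unfolding p_def by (simp add: axis_eq_0_iff)
  then obtain c where hc: "\<And>t x. t < 0 \<Longrightarrow> PCT_fmode \<omega> \<nu> \<alpha> \<theta> p t x = c * fmode \<omega> \<nu> \<alpha> \<theta> p t x"
    using H by blast
  have np: "norm p > 0" using p0 by simp
  have s1: "sin (pi * \<nu>) > 0" using assms by (intro sin_gt_zero) auto
  have s2: "sin \<theta> > 0" using assms by (intro sin_gt_zero) auto
  define Q where "Q = Qc \<omega> \<nu> \<theta>"
  have Q0: "Q \<noteq> 0" unfolding Q_def using Qc_nz[OF assms(1) s1 s2] .
  have cQ: "cnj Q = - Q" unfolding Q_def using Qc_cnj s1 s2 by simp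
  define A where "A = Ac \<alpha> \<theta>"
  define B where "B = Bc \<alpha> \<theta>"
  define A' where "A' = cnj A * exp (- \<i> * of_real (pi * \<nu>))"
  define B' where "B' = cnj B * exp (\<i> * of_real (pi * \<nu>))"
  have lin: "(- \<i> * A' - c * A) * of_real (besselJ \<nu> y) + (\<i> * B' + c * B) * of_real (besselJ (-\<nu>) y) = 0"
    if y: "y > 0" for y
  proof -
    define t where "t = - y / norm p"
    have t0: "t < 0" unfolding t_def using y np by simp
    have ty: "- norm p * t = y" unfolding t_def using np by simp
    define W where "W = complex_of_real ((- \<omega> * t) powr (3/2))"
    have W0: "W \<noteq> 0" unfolding W_def using t0 assms(1) by (simp add: mult_neg_pos)
    have "PCT_fmode \<omega> \<nu> \<alpha> \<theta> p t 0 = c * fmode \<omega> \<nu> \<alpha> \<theta> p t 0" by (rule hc[OF t0])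
    hence "- Q * \<i> * W * (A' * of_real (besselJ \<nu> y) - B' * of_real (besselJ (-\<nu>) y))
        = c * (Q * W * (A * of_real (besselJ \<nu> y) - B * of_real (besselJ (-\<nu>) y)))"
      unfolding PCT_eq[OF assms(1) t0 p0] fm_eq[OF assms(1) t0] ty
      by (simp add: cQ[unfolded Q_def] Q_def W_def A_def B_def A'_def B'_def)
    hence "(Q * W) * ((- \<i> * A' - c * A) * of_real (besselJ \<nu> y) + (\<i> * B' + c * B) * of_real (besselJ (-\<nu>) y)) = 0"
      by (simp add: algebra_simps)
    thus ?thesis using Q0 W0 by simp
  qed
  from bessel_indep[OF assms(2,3) lin] have z1: "- \<i> * A' - c * A = 0" and z2: "\<i> * B' + c * B = 0"
    by simp_all
  from z1 have e1: "c * A = - \<i> * A'" by (simp add: algebra_simps)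
  from z2 have e2: "c * B = - \<i> * B'" by (simp add: add_eq_0_iff algebra_simps)
  define zA where "zA = - \<i> * complex_of_real (\<theta> / 2) - complex_of_real \<alpha>"
  define zB where "zB = \<i> * complex_of_real (\<theta> / 2) + complex_of_real \<alpha>"
  have Ae: "A = exp zA" unfolding A_def Ac_def zA_def ..
  have Be: "B = exp zB" unfolding B_def Bc_def zB_def ..
  have A'e: "A' = exp (\<i> * complex_of_real (\<theta> / 2) - complex_of_real \<alpha> + (- \<i> * of_real (pi * \<nu>)))"
    unfolding A'_def A_def Ac_def by (simp only: exp_cnj cc exp_add[symmetric])
  have B'e: "B' = exp (- \<i> * complex_of_real (\<theta> / 2) + complex_of_real \<alpha> + (\<i> * of_real (pi * \<nu>)))"
    unfolding B'_def B_def Bc_def by (simp only: exp_cnj cc exp_add[symmetric])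
  have c1: "c = - \<i> * (A' / A)" using e1 Ae by (simp add: eq_divide_eq field_simps)
  have c2: "c = - \<i> * (B' / B)" using e2 Be by (simp add: eq_divide_eq field_simps)
  have "A' / A = exp (\<i> * of_real (\<theta> - pi * \<nu>))"
    unfolding A'e Ae exp_diff[symmetric] zA_def by (rule arg_cong[where f=exp]) (simp add: algebra_simps)
  moreover have "B' / B = exp (\<i> * of_real (- (\<theta> - pi * \<nu>)))"
    unfolding B'e Be exp_diff[symmetric] zB_def by (rule arg_cong[where f=exp]) (simp add: algebra_simps)
  ultimately have "cis (\<theta> - pi * \<nu>) = cis (- (\<theta> - pi * \<nu>))"
    using c1 c2 by (simp add: cis_conv_exp)
  hence "Im (cis (\<theta> - pi * \<nu>)) = Im (cis (- (\<theta> - pi * \<nu>)))" by simp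
  hence "sin (\<theta> - pi * \<nu>) = sin (- (\<theta> - pi * \<nu>))" by simp
  hence "sin (\<theta> - pi * \<nu>) = - sin (\<theta> - pi * \<nu>)" by (simp only: sin_minus)
  hence "sin (\<theta> - pi * \<nu>) = 0" by simp
  moreover have "0 < pi * \<nu>" "pi * \<nu> < pi * 1" using assms by (simp_all add: mult_strict_left_mono)
  hence "- pi < \<theta> - pi * \<nu>" "\<theta> - pi * \<nu> < pi" using assms by linarith+
  ultimately have "\<theta> - pi * \<nu> = 0" using sin_eq_0_pi by blast
  thus ?thesis by simp
qed


theorem corollary6:
  fixes \<omega> \<mu> lam \<nu> :: real
  assumes "\<omega> > 0" and "lam > 0" and "\<mu> < lam"
    and "\<nu> = sqrt (lam\<^sup>2 - \<mu>\<^sup>2)" and "0 < \<nu>" and "\<nu> < 1"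
  shows "(\<forall>\<alpha> \<theta>. 0 < \<theta> \<and> \<theta> < pi \<and>
            (\<forall>p::real^3. p \<noteq> 0 \<longrightarrow> (\<exists>c::complex. \<forall>t<0. \<forall>x.
               PCT_fmode \<omega> \<nu> \<alpha> \<theta> p t x = c * fmode \<omega> \<nu> \<alpha> \<theta> p t x))
            \<longrightarrow> \<theta> = pi * \<nu>)
       \<and> (\<forall>\<alpha> (p::real^3) t x. p \<noteq> 0 \<longrightarrow> t < 0 \<longrightarrow>
            PCT_fmode \<omega> \<nu> \<alpha> (pi * \<nu>) p t x = - \<i> * fmode \<omega> \<nu> \<alpha> (pi * \<nu>) p t x)"
proof (intro conjI allI impI)
  fix \<alpha> \<theta> :: real
  assume h: "0 < \<theta> \<and> \<theta> < pi \<and>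
            (\<forall>p::real^3. p \<noteq> 0 \<longrightarrow> (\<exists>c::complex. \<forall>t<0. \<forall>x.
               PCT_fmode \<omega> \<nu> \<alpha> \<theta> p t x = c * fmode \<omega> \<nu> \<alpha> \<theta> p t x))"
  show "\<theta> = pi * \<nu>" using part1[of \<omega> \<nu> \<theta> \<alpha>] h assms by blast
next
  fix \<alpha> :: real and p :: "real^3" and t :: real and x :: "real^3"
  assume "p \<noteq> 0" "t < 0"
  thus "PCT_fmode \<omega> \<nu> \<alpha> (pi * \<nu>) p t x = - \<i> * fmode \<omega> \<nu> \<alpha> (pi * \<nu>) p t x"
    using part2 assms by blast
qed

end
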